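(* Let $n\in\mathbb{R}$, let $\Omega_1\in\mathbb{R}[x]$ be a nonzero polynomial of degree at most $2$, let $L\in\mathbb{R}[x]$ have degree at most $1$, and let $I$ be an open interval on which $\Omega_1$ has no zeros. Consider the quadratic system $$\dot x=\Omega_1(x),\qquad \dot y=(2n+1)L'(x)\Omega_1(x)-\frac{n(n+1)}{2}\Omega_1(x)\Omega_1''(x)-L(x)^2+y^2,$$ and the linear equation $$\Omega_1(x)w''+(\Omega_1'(x)-2L(x))w'+\frac n2\left(4L'(x)-(n+1)\Omega_1''(x)\right)w=0.\qquad( * )$$ (i) For every solution $p\in C^2(I)$ of $( * )$, the function $f_p(x,y)=p(x)\,y+\Omega_1(x)p'(x)-L(x)p(x)$ satisfies $\Omega_1\,\partial_xf_p+\dot y\,\partial_yf_p=(y+L(x))\,f_p$ on $I\times\mathbb{R}$ (here $\dot y$ denotes the right-hand side of the second equation). (ii) If $\{p_1,p_2\}$ is a fundamental system of solutions of $( * )$ on $I$, then $H=f_{p_1}/f_{p_2}$ is a first integral of the system on the open set $\{(x,y)\in I\times\mathbb{R}: f_{p_2}(x,y)\neq0\}$.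
   Context: A first integral of the planar system $\dot x=P,\dot y=Q$ on an open set $U$ is a $C^1$ function $H$ with $P\partial_xH+Q\partial_yH=0$ on $U$ which is not constant on any nonempty open subset of $U$. *)

theory Defs
  imports "HOL-Analysis.Analysis" "HOL-Computational_Algebra.Polynomial"
begin

definition C2_on :: "real set \<Rightarrow> (real \<Rightarrow> real) \<Rightarrow> bool" where
  "C2_on I p \<longleftrightarrow> (\<forall>x\<in>I. p differentiable (at x)) \<and>
     (\<forall>x\<in>I. deriv p differentiable (at x)) \<and> continuous_on I (deriv (deriv p))"

definition is_sol :: "real poly \<Rightarrow> real poly \<Rightarrow> real \<Rightarrow> real set \<Rightarrow> (real \<Rightarrow> real) \<Rightarrow> bool" where
  "is_sol Om L n I p \<longleftrightarrow> C2_on I p \<and>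
     (\<forall>x\<in>I. poly Om x * deriv (deriv p) x
        + (poly (pderiv Om) x - 2 * poly L x) * deriv p x
        + n / 2 * (4 * poly (pderiv L) x - (n + 1) * poly (pderiv (pderiv Om)) x) * p x = 0)"

definition fundamental_system :: "real poly \<Rightarrow> real poly \<Rightarrow> real \<Rightarrow> real set \<Rightarrow> (real \<Rightarrow> real) \<Rightarrow> (real \<Rightarrow> real) \<Rightarrow> bool" where
  "fundamental_system Om L n I p1 p2 \<longleftrightarrow> is_sol Om L n I p1 \<and> is_sol Om L n I p2 \<and>
     (\<forall>c1 c2::real. (\<forall>x\<in>I. c1 * p1 x + c2 * p2 x = 0) \<longrightarrow> c1 = 0 \<and> c2 = 0)"

definition fp :: "real poly \<Rightarrow> real poly \<Rightarrow> (real \<Rightarrow> real) \<Rightarrow> real \<Rightarrow> real \<Rightarrow> real" where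
  "fp Om L p x y = p x * y + poly Om x * deriv p x - poly L x * p x"

definition Qsys :: "real poly \<Rightarrow> real poly \<Rightarrow> real \<Rightarrow> real \<Rightarrow> real \<Rightarrow> real" where
  "Qsys Om L n x y = (2 * n + 1) * poly (pderiv L) x * poly Om x
     - n * (n + 1) / 2 * poly Om x * poly (pderiv (pderiv Om)) x - (poly L x)^2 + y^2"

definition first_integral :: "(real \<times> real \<Rightarrow> real) \<Rightarrow> (real \<times> real \<Rightarrow> real) \<Rightarrow> (real \<times> real) set \<Rightarrow> (real \<times> real \<Rightarrow> real) \<Rightarrow> bool" where
  "first_integral P Q U H \<longleftrightarrow>
     (\<exists>Hx Hy. (\<forall>z\<in>U. (H has_derivative (\<lambda>h. Hx z * fst h + Hy z * snd h)) (at z)) \<and>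
        continuous_on U Hx \<and> continuous_on U Hy \<and>
        (\<forall>z\<in>U. P z * Hx z + Q z * Hy z = 0)) \<and>
     (\<forall>V. open V \<and> V \<noteq> {} \<and> V \<subseteq> U \<longrightarrow> \<not> (\<exists>c. \<forall>z\<in>V. H z = c))"

end

theory Submission imports Defs begin

lemma key_ineq:
  fixes a b r M :: real
  assumes "M \<ge> 0" "\<bar>r\<bar> \<le> M * (\<bar>b\<bar> + \<bar>a\<bar>)"
  shows "\<bar>2*a*b + 2*b*r\<bar> \<le> (1 + 3*M) * (a\<^sup>2 + b\<^sup>2)"
proof -
  have h0: "0 \<le> (\<bar>a\<bar> - \<bar>b\<bar>)\<^sup>2" by simp
  have h1: "\<bar>2*a*b\<bar> \<le> a\<^sup>2 + b\<^sup>2"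
    using h0 by (simp add: abs_mult power2_eq_square algebra_simps)
  have "\<bar>2*b*r\<bar> = 2*\<bar>b\<bar>*\<bar>r\<bar>" by (simp add: abs_mult)
  also have "\<dots> \<le> 2*\<bar>b\<bar>*(M * (\<bar>b\<bar> + \<bar>a\<bar>))" using assms by (simp add: mult_left_mono)
  also have "\<dots> = M * (2*b\<^sup>2 + 2*\<bar>a\<bar>*\<bar>b\<bar>)" by (simp add: algebra_simps power2_eq_square)
  also have "\<dots> \<le> M * (3*(a\<^sup>2 + b\<^sup>2))"
  proof (rule mult_left_mono[OF _ assms(1)])
    have "0 \<le> (\<bar>a\<bar> - \<bar>b\<bar>)\<^sup>2" by simp
    hence "2*\<bar>a\<bar>*\<bar>b\<bar> \<le> a\<^sup>2 + b\<^sup>2" by (simp add: power2_eq_square algebra_simps)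
    moreover have "0 \<le> a\<^sup>2" by simp
    moreover have "3*(a\<^sup>2 + b\<^sup>2) = 3*a\<^sup>2 + 3*b\<^sup>2" by simp
    ultimately show "2*b\<^sup>2 + 2*\<bar>a\<bar>*\<bar>b\<bar> \<le> 3*(a\<^sup>2 + b\<^sup>2)" by linarith
  qed
  finally have "\<bar>2*b*r\<bar> \<le> 3*M*(a\<^sup>2 + b\<^sup>2)" by (simp add: algebra_simps)
  moreover have "\<bar>2*a*b + 2*b*r\<bar> \<le> \<bar>2*a*b\<bar> + \<bar>2*b*r\<bar>" by (rule abs_triangle_ineq)
  ultimately show ?thesis using h1 by (simp add: algebra_simps)
qed

lemma local_zero:
  fixes q q1 r :: "real \<Rightarrow> real"
  assumes "x0 \<in> {u..v}" "q x0 = 0" "q1 x0 = 0" "M \<ge> 0"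
    and dq: "\<forall>x\<in>{u..v}. (q has_real_derivative q1 x) (at x)"
    and dq1: "\<forall>x\<in>{u..v}. (q1 has_real_derivative r x) (at x)"
    and bd: "\<forall>x\<in>{u..v}. \<bar>r x\<bar> \<le> M * (\<bar>q1 x\<bar> + \<bar>q x\<bar>)"
    and x: "x \<in> {u..v}"
  shows "q x = 0 \<and> q1 x = 0"
proof -
  define K where "K = 1 + 3*M"
  define E where "E = (\<lambda>t. (q t)\<^sup>2 + (q1 t)\<^sup>2)"
  have dE: "(E has_real_derivative (2*q t*q1 t + 2*q1 t*r t)) (at t)" if "t \<in> {u..v}" for t
    unfolding E_def using dq dq1 that
    by (auto intro!: derivative_eq_intros simp: algebra_simps)
  have bE: "\<bar>2*q t*q1 t + 2*q1 t*r t\<bar> \<le> K * E t" if "t \<in> {u..v}" for t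
    unfolding K_def E_def using key_ineq[OF assms(4), of "r t" "q1 t" "q t"] bd that by auto
  have E0: "E x0 = 0" using assms unfolding E_def by simp
  have Enn: "E t \<ge> 0" for t unfolding E_def by simp
  have "E x = 0"
  proof (cases "x0 \<le> x")
    case True
    define g where "g = (\<lambda>t. E t * exp (-K*t))"
    have "g x0 \<ge> g x"
    proof (rule DERIV_nonpos_imp_nonincreasing[OF True])
      fix t assume t: "x0 \<le> t" "t \<le> x"
      hence tI: "t \<in> {u..v}" using assms by auto
      show "\<exists>y. DERIV g t :> y \<and> y \<le> 0"
      proof (intro exI conjI)
        show "DERIV g t :> (2*q t*q1 t + 2*q1 t*r t) * exp (-K*t) + E t * (exp (-K*t) * (-K))"
          unfolding g_def by (auto intro!: derivative_eq_intros dE[OF tI])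
        have "(2*q t*q1 t + 2*q1 t*r t) \<le> K * E t" using bE[OF tI] by linarith
        hence "(2*q t*q1 t + 2*q1 t*r t) * exp (-K*t) \<le> K * E t * exp (-K*t)"
          by (simp add: mult_right_mono)
        thus "(2*q t*q1 t + 2*q1 t*r t) * exp (-K*t) + E t * (exp (-K*t) * (-K)) \<le> 0"
          by (simp add: algebra_simps)
      qed
    qed
    hence "E x * exp (-K*x) \<le> 0" using E0 unfolding g_def by simp
    hence "E x \<le> 0" by (simp add: mult_le_0_iff)
    thus ?thesis using Enn[of x] by simp
  next
    case False
    hence le: "x \<le> x0" by simp
    define g where "g = (\<lambda>t. E t * exp (K*t))"
    have "g x \<le> g x0"
    proof (rule DERIV_nonneg_imp_nondecreasing[OF le])
      fix t assume t: "x \<le> t" "t \<le> x0"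
      hence tI: "t \<in> {u..v}" using assms by auto
      show "\<exists>y. DERIV g t :> y \<and> y \<ge> 0"
      proof (intro exI conjI)
        show "DERIV g t :> (2*q t*q1 t + 2*q1 t*r t) * exp (K*t) + E t * (exp (K*t) * K)"
          unfolding g_def by (auto intro!: derivative_eq_intros dE[OF tI])
        have "-(2*q t*q1 t + 2*q1 t*r t) \<le> K * E t" using bE[OF tI] by linarith
        hence "-(2*q t*q1 t + 2*q1 t*r t) * exp (K*t) \<le> K * E t * exp (K*t)"
          by (simp add: mult_right_mono)
        thus "(2*q t*q1 t + 2*q1 t*r t) * exp (K*t) + E t * (exp (K*t) * K) \<ge> 0"
          by (simp add: algebra_simps)
      qed
    qed
    hence "E x * exp (K*x) \<le> 0" using E0 unfolding g_def by simp
    hence "E x \<le> 0" by (simp add: mult_le_0_iff)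
    thus ?thesis using Enn[of x] by simp
  qed
  thus ?thesis unfolding E_def
    by (metis add_nonneg_eq_0_iff zero_eq_power2 zero_le_power2)
qed


lemma cont_bound:
  fixes f :: "real \<Rightarrow> real"
  assumes "continuous_on K f" "compact K"
  obtains M where "M > 0" "\<forall>x\<in>K. \<bar>f x\<bar> \<le> M"
proof -
  have "bounded (f ` K)" using assms compact_continuous_image compact_imp_bounded by blast
  then obtain M where "M > 0" "\<forall>y\<in>f ` K. norm y \<le> M" unfolding bounded_pos by blast
  thus ?thesis using that by auto
qed

lemma ode_unique:
  fixes q q1 r a b :: "real \<Rightarrow> real"
  assumes I: "open I" "connected I" and x0: "x0 \<in> I" "q x0 = 0" "q1 x0 = 0"
    and dq: "\<forall>x\<in>I. (q has_real_derivative q1 x) (at x)"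
    and dq1: "\<forall>x\<in>I. (q1 has_real_derivative r x) (at x)"
    and ca: "continuous_on I a" and cb: "continuous_on I b"
    and req: "\<forall>x\<in>I. r x = a x * q1 x + b x * q x"
  shows "\<forall>x\<in>I. q x = 0"
proof -
  define Z where "Z = {x\<in>I. q x = 0 \<and> q1 x = 0}"
  have "open Z"
    unfolding open_contains_ball
  proof
    fix z assume z: "z \<in> Z"
    then obtain d where d: "d > 0" "cball z d \<subseteq> I" using I(1) open_contains_cball unfolding Z_def by blast
    have sub: "{z-d..z+d} \<subseteq> I" using d cball_eq_atLeastAtMost by metis
    obtain Ma where Ma: "Ma > 0" "\<forall>x\<in>{z-d..z+d}. \<bar>a x\<bar> \<le> Ma"
      using cont_bound[OF continuous_on_subset[OF ca sub] compact_Icc] by blast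
    obtain Mb where Mb: "Mb > 0" "\<forall>x\<in>{z-d..z+d}. \<bar>b x\<bar> \<le> Mb"
      using cont_bound[OF continuous_on_subset[OF cb sub] compact_Icc] by blast
    define M where "M = max Ma Mb"
    have bd: "\<forall>x\<in>{z-d..z+d}. \<bar>r x\<bar> \<le> M * (\<bar>q1 x\<bar> + \<bar>q x\<bar>)"
    proof
      fix x assume x: "x \<in> {z-d..z+d}"
      have "r x = a x * q1 x + b x * q x" using req sub x by auto
      hence "\<bar>r x\<bar> \<le> \<bar>a x * q1 x\<bar> + \<bar>b x * q x\<bar>" by (simp only: abs_triangle_ineq)
      hence "\<bar>r x\<bar> \<le> \<bar>a x\<bar> * \<bar>q1 x\<bar> + \<bar>b x\<bar> * \<bar>q x\<bar>" by (simp add: abs_mult)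
      also have "\<dots> \<le> M * \<bar>q1 x\<bar> + M * \<bar>q x\<bar>"
        using Ma Mb x unfolding M_def
        by (intro add_mono mult_right_mono) (auto simp: le_max_iff_disj)
      finally show "\<bar>r x\<bar> \<le> M * (\<bar>q1 x\<bar> + \<bar>q x\<bar>)" by (simp add: algebra_simps)
    qed
    have "ball z d \<subseteq> Z"
    proof
      fix x assume x: "x \<in> ball z d"
      hence xI: "x \<in> {z-d..z+d}" by (auto simp: dist_real_def)
      have "q x = 0 \<and> q1 x = 0"
        apply (rule local_zero[of z "z-d" "z+d" q q1 M r])
        using z d xI dq dq1 bd sub Ma Mb unfolding Z_def M_def by auto
      thus "x \<in> Z" using xI sub unfolding Z_def by auto
    qed
    thus "\<exists>e>0. ball z e \<subseteq> Z" using d by blast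
  qed
  hence op: "openin (top_of_set I) Z" by (intro open_subset) (auto simp: Z_def)
  have cq: "continuous_on I q"
    using dq by (intro continuous_at_imp_continuous_on) (auto intro: DERIV_isCont)
  have cq1: "continuous_on I q1"
    using dq1 by (intro continuous_at_imp_continuous_on) (auto intro: DERIV_isCont)
  have "Z = {x\<in>I. q x = 0} \<inter> {x\<in>I. q1 x = 0}" unfolding Z_def by auto
  hence cl: "closedin (top_of_set I) Z"
    using continuous_closedin_preimage_constant[OF cq] continuous_closedin_preimage_constant[OF cq1]
    by (simp add: closedin_Int)
  have "Z = {} \<or> Z = I" using I(2) op cl unfolding connected_clopen by blast
  moreover have "x0 \<in> Z" using x0 unfolding Z_def by auto
  ultimately have "Z = I" by auto
  thus ?thesis unfolding Z_def by auto
qed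


definition fxp :: "real poly \<Rightarrow> real poly \<Rightarrow> (real \<Rightarrow> real) \<Rightarrow> real \<Rightarrow> real \<Rightarrow> real" where
  "fxp Om L p x y = deriv p x * y + poly (pderiv Om) x * deriv p x + poly Om x * deriv (deriv p) x
     - poly (pderiv L) x * p x - poly L x * deriv p x"

lemma C2_derivs:
  assumes "C2_on I p" "x \<in> I"
  shows "(p has_real_derivative deriv p x) (at x)"
    and "(deriv p has_real_derivative deriv (deriv p) x) (at x)"
  using assms unfolding C2_on_def by (auto simp: DERIV_deriv_iff_real_differentiable)

lemma C2_cont:
  assumes "C2_on I p"
  shows "continuous_on I p" "continuous_on I (deriv p)" "continuous_on I (deriv (deriv p))"
proof -
  show "continuous_on I p" using C2_derivs(1)[OF assms]
    by (intro continuous_at_imp_continuous_on) (auto intro: DERIV_isCont)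
  show "continuous_on I (deriv p)" using C2_derivs(2)[OF assms]
    by (intro continuous_at_imp_continuous_on) (auto intro: DERIV_isCont)
  show "continuous_on I (deriv (deriv p))" using assms unfolding C2_on_def by auto
qed

lemma fp_dx:
  assumes "C2_on I p" "x \<in> I"
  shows "((\<lambda>t. fp Om L p t y) has_real_derivative fxp Om L p x y) (at x)"
  unfolding fp_def fxp_def
  using C2_derivs[OF assms]
  by (auto intro!: derivative_eq_intros simp: algebra_simps)

lemma fp_dy: "((\<lambda>s. fp Om L p x s) has_real_derivative p x) (at y)"
  unfolding fp_def by (auto intro!: derivative_eq_intros)

lemma alg1:
  fixes W W1 W2 Lx L1 P P1 P2 y n :: real
  shows "W*(P1*y + W1*P1 + W*P2 - L1*P - Lx*P1) + ((2*n+1)*L1*W - n*(n+1)/2*W*W2 - Lx^2 + y^2)*P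
    - (y+Lx)*(P*y + W*P1 - Lx*P) = W*(W*P2 + (W1 - 2*Lx)*P1 + n/2*(4*L1 - (n+1)*W2)*P)"
  by (simp add: field_simps power2_eq_square)

lemma ident:
  assumes "is_sol Om L n I p" "x \<in> I"
  shows "poly Om x * fxp Om L p x y + Qsys Om L n x y * p x = (y + poly L x) * fp Om L p x y"
proof -
  have e: "poly Om x * deriv (deriv p) x
        + (poly (pderiv Om) x - 2 * poly L x) * deriv p x
        + n / 2 * (4 * poly (pderiv L) x - (n + 1) * poly (pderiv (pderiv Om)) x) * p x = 0"
    using assms unfolding is_sol_def by auto
  have "poly Om x * fxp Om L p x y + Qsys Om L n x y * p x - (y + poly L x) * fp Om L p x y
     = poly Om x * (poly Om x * deriv (deriv p) x
        + (poly (pderiv Om) x - 2 * poly L x) * deriv p x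
        + n / 2 * (4 * poly (pderiv L) x - (n + 1) * poly (pderiv (pderiv Om)) x) * p x)"
    unfolding fxp_def Qsys_def fp_def by (rule alg1)
  also have "\<dots> = 0" using e by simp
  finally have "poly Om x * fxp Om L p x y + Qsys Om L n x y * p x - (y + poly L x) * fp Om L p x y = 0" .
  thus ?thesis by simp
qed

lemma comp_fst:
  assumes "(g has_real_derivative D) (at (fst z))"
  shows "((\<lambda>z. g (fst z)) has_derivative (\<lambda>h. D * fst h)) (at z)"
proof -
  have "((g \<circ> fst) has_derivative ((*) D \<circ> fst)) (at z)"
    by (rule diff_chain_at[OF has_derivative_fst[OF has_derivative_ident]])
       (use assms has_field_derivative_imp_has_derivative in auto)
  thus ?thesis by (simp add: o_def)
qed

lemma grad:
  assumes "C2_on I p" "fst z \<in> I"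
  shows "((\<lambda>z. fp Om L p (fst z) (snd z)) has_derivative
      (\<lambda>h. fxp Om L p (fst z) (snd z) * fst h + p (fst z) * snd h)) (at z)"
proof -
  note d = C2_derivs[OF assms]
  have d1: "((\<lambda>z. p (fst z)) has_derivative (\<lambda>h. deriv p (fst z) * fst h)) (at z)"
    by (rule comp_fst[OF d(1)])
  have d2: "((\<lambda>z. deriv p (fst z)) has_derivative (\<lambda>h. deriv (deriv p) (fst z) * fst h)) (at z)"
    by (rule comp_fst[OF d(2)])
  have d3: "((\<lambda>z. poly Om (fst z)) has_derivative (\<lambda>h. poly (pderiv Om) (fst z) * fst h)) (at z)"
    by (rule comp_fst[OF poly_DERIV])
  have d4: "((\<lambda>z. poly L (fst z)) has_derivative (\<lambda>h. poly (pderiv L) (fst z) * fst h)) (at z)"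
    by (rule comp_fst[OF poly_DERIV])
  have ds: "((\<lambda>z. snd z) has_derivative (\<lambda>h. snd h)) (at z)"
    by (rule has_derivative_snd[OF has_derivative_ident])
  have "((\<lambda>z. p (fst z) * snd z + poly Om (fst z) * deriv p (fst z) - poly L (fst z) * p (fst z))
     has_derivative (\<lambda>h. (p (fst z) * snd h + deriv p (fst z) * fst h * snd z)
        + (poly Om (fst z) * (deriv (deriv p) (fst z) * fst h) + poly (pderiv Om) (fst z) * fst h * deriv p (fst z))
        - (poly L (fst z) * (deriv p (fst z) * fst h) + poly (pderiv L) (fst z) * fst h * p (fst z)))) (at z)"
    by (intro has_derivative_diff has_derivative_add has_derivative_mult d1 d2 d3 d4 ds)
  thus ?thesis
    unfolding fp_def
    by (rule has_derivative_eq_rhs) (auto simp: fun_eq_iff fxp_def algebra_simps)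
qed

lemma cfst:
  assumes "continuous_on I g" "\<forall>z\<in>U. fst z \<in> I"
  shows "continuous_on U (\<lambda>z. g (fst z))"
  by (rule continuous_on_compose2[OF assms(1) continuous_on_fst[OF continuous_on_id]]) (use assms in auto)


theorem mainTheorem10:
  fixes n :: real and Om L :: "real poly" and I :: "real set"
  assumes "Om \<noteq> 0" and "degree Om \<le> 2" and "degree L \<le> 1"
    and "open I" and "connected I" and "I \<noteq> {}"
    and "\<forall>x\<in>I. poly Om x \<noteq> 0"
  shows "(\<forall>p. is_sol Om L n I p \<longrightarrow>
            (\<forall>x\<in>I. \<forall>y::real.
               poly Om x * deriv (\<lambda>t. fp Om L p t y) x
               + Qsys Om L n x y * deriv (\<lambda>s. fp Om L p x s) y
               = (y + poly L x) * fp Om L p x y))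
       \<and> (\<forall>p1 p2. fundamental_system Om L n I p1 p2 \<longrightarrow>
            first_integral (\<lambda>(x, y). poly Om x) (\<lambda>(x, y). Qsys Om L n x y)
              {(x, y). x \<in> I \<and> fp Om L p2 x y \<noteq> 0}
              (\<lambda>(x, y). fp Om L p1 x y / fp Om L p2 x y))"
proof (intro conjI allI impI ballI)
  fix p x y assume p: "is_sol Om L n I p" and x: "x \<in> I"
  have C2: "C2_on I p" using p unfolding is_sol_def by auto
  have "deriv (\<lambda>t. fp Om L p t y) x = fxp Om L p x y"
    by (rule DERIV_imp_deriv[OF fp_dx[OF C2 x]])
  moreover have "deriv (\<lambda>s. fp Om L p x s) y = p x"
    by (rule DERIV_imp_deriv[OF fp_dy])
  ultimately show "poly Om x * deriv (\<lambda>t. fp Om L p t y) x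
               + Qsys Om L n x y * deriv (\<lambda>s. fp Om L p x s) y
               = (y + poly L x) * fp Om L p x y"
    using ident[OF p x] by simp
next
  fix p1 p2 assume fs: "fundamental_system Om L n I p1 p2"
  have fs': "is_sol Om L n I p1 \<and> is_sol Om L n I p2 \<and>
     (\<forall>c1 c2::real. (\<forall>x\<in>I. c1 * p1 x + c2 * p2 x = 0) \<longrightarrow> c1 = 0 \<and> c2 = 0)"
    using fs unfolding fundamental_system_def .
  have s1: "is_sol Om L n I p1" using fs' by (rule conjunct1)
  have s2: "is_sol Om L n I p2" using fs' by (blast dest: conjunct2 conjunct1)
  have indep: "\<forall>c1 c2::real. (\<forall>x\<in>I. c1 * p1 x + c2 * p2 x = 0) \<longrightarrow> c1 = 0 \<and> c2 = 0"
    using fs' by (blast dest: conjunct2)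
  have C1: "C2_on I p1" using s1 unfolding is_sol_def by (rule conjunct1)
  have C2: "C2_on I p2" using s2 unfolding is_sol_def by (rule conjunct1)
  define U where "U = {(x, y). x \<in> I \<and> fp Om L p2 x y \<noteq> 0}"
  define F1 where "F1 = (\<lambda>z. fp Om L p1 (fst z) (snd z))"
  define F2 where "F2 = (\<lambda>z. fp Om L p2 (fst z) (snd z))"
  define G1 where "G1 = (\<lambda>z. fxp Om L p1 (fst z) (snd z))"
  define G2 where "G2 = (\<lambda>z. fxp Om L p2 (fst z) (snd z))"
  define Hx where "Hx = (\<lambda>z. (G1 z * F2 z - F1 z * G2 z) / (F2 z * F2 z))"
  define Hy where "Hy = (\<lambda>z. (p1 (fst z) * F2 z - F1 z * p2 (fst z)) / (F2 z * F2 z))"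
  have Hfun: "(\<lambda>(x, y). fp Om L p1 x y / fp Om L p2 x y) = (\<lambda>z. F1 z / F2 z)"
    unfolding F1_def F2_def by (auto simp: fun_eq_iff)
  have Uchar: "z \<in> U \<longleftrightarrow> fst z \<in> I \<and> F2 z \<noteq> 0" for z
    unfolding U_def F2_def by (cases z) auto
  have part1: "\<forall>z\<in>U. ((\<lambda>(x, y). fp Om L p1 x y / fp Om L p2 x y) has_derivative
                 (\<lambda>h. Hx z * fst h + Hy z * snd h)) (at z)"
  proof
    fix z assume z: "z \<in> U"
    hence zI: "fst z \<in> I" and nz: "F2 z \<noteq> 0" using Uchar by auto
    have d1: "(F1 has_derivative (\<lambda>h. G1 z * fst h + p1 (fst z) * snd h)) (at z)"
      unfolding F1_def G1_def by (rule grad[OF C1 zI])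
    have d2: "(F2 has_derivative (\<lambda>h. G2 z * fst h + p2 (fst z) * snd h)) (at z)"
      unfolding F2_def G2_def by (rule grad[OF C2 zI])
    show "((\<lambda>(x, y). fp Om L p1 x y / fp Om L p2 x y) has_derivative
                 (\<lambda>h. Hx z * fst h + Hy z * snd h)) (at z)"
      unfolding Hfun
      by (rule has_derivative_eq_rhs[OF has_derivative_divide'[OF d1 d2 nz]])
         (use nz in \<open>auto simp: fun_eq_iff Hx_def Hy_def field_simps\<close>)
  qed
  have UI: "\<forall>z\<in>U. fst z \<in> I" using Uchar by auto
  note c1 = C2_cont[OF C1] and c2 = C2_cont[OF C2]
  have cont: "continuous_on U Hx \<and> continuous_on U Hy"
    unfolding Hx_def Hy_def F1_def F2_def G1_def G2_def fp_def fxp_def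
    using cfst[OF c1(1) UI] cfst[OF c1(2) UI] cfst[OF c1(3) UI]
          cfst[OF c2(1) UI] cfst[OF c2(2) UI] cfst[OF c2(3) UI]
      Uchar[unfolded F2_def fp_def]
    by (intro conjI continuous_intros) auto
  have orth: "\<forall>z\<in>U. (\<lambda>(x, y). poly Om x) z * Hx z + (\<lambda>(x, y). Qsys Om L n x y) z * Hy z = 0"
  proof
    fix z assume z: "z \<in> U"
    obtain x y where zxy: "z = (x, y)" by (cases z)
    have xI: "x \<in> I" and nz: "F2 z \<noteq> 0" using z Uchar zxy by auto
    have i1: "poly Om x * G1 z + Qsys Om L n x y * p1 x = (y + poly L x) * F1 z"
      using ident[OF s1 xI] unfolding G1_def F1_def zxy by simp
    have i2: "poly Om x * G2 z + Qsys Om L n x y * p2 x = (y + poly L x) * F2 z"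
      using ident[OF s2 xI] unfolding G2_def F2_def zxy by simp
    have "poly Om x * Hx z + Qsys Om L n x y * Hy z
        = (F2 z * (poly Om x * G1 z + Qsys Om L n x y * p1 x)
           - F1 z * (poly Om x * G2 z + Qsys Om L n x y * p2 x)) / (F2 z * F2 z)"
      unfolding Hx_def Hy_def zxy using nz zxy by (simp add: field_simps)
    also have "\<dots> = 0" unfolding i1 i2 by (simp add: algebra_simps)
    finally show "(\<lambda>(x, y). poly Om x) z * Hx z + (\<lambda>(x, y). Qsys Om L n x y) z * Hy z = 0"
      using zxy by simp
  qed
  have nonconst: "\<forall>V. open V \<and> V \<noteq> {} \<and> V \<subseteq> U \<longrightarrow>
      \<not> (\<exists>c. \<forall>z\<in>V. (\<lambda>(x, y). fp Om L p1 x y / fp Om L p2 x y) z = c)"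
  proof (intro allI impI notI)
    fix V assume V: "open V \<and> V \<noteq> {} \<and> V \<subseteq> U"
      and "\<exists>c. \<forall>z\<in>V. (\<lambda>(x, y). fp Om L p1 x y / fp Om L p2 x y) z = c"
    then obtain c where hc: "\<forall>z\<in>V. (\<lambda>(x, y). fp Om L p1 x y / fp Om L p2 x y) z = c" by blast
    obtain x0 y0 where z0: "(x0, y0) \<in> V" using V by auto
    have oV: "open V" using V by blast
    obtain e where e: "e > 0" "ball (x0, y0) e \<subseteq> V" using oV z0 unfolding open_contains_ball by blast
    define y1 where "y1 = y0 + e/2"
    have "dist (x0, y0) (x0, y1) < e" using e(1) by (simp add: dist_Pair_Pair y1_def dist_real_def)
    hence z1: "(x0, y1) \<in> V" using e by auto
    have x0I: "x0 \<in> I" using z0 V unfolding U_def by auto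
    have eq: "fp Om L p1 x0 y = c * fp Om L p2 x0 y" if "(x0, y) \<in> V" for y
    proof -
      have "fp Om L p2 x0 y \<noteq> 0" using that V unfolding U_def by auto
      moreover have "fp Om L p1 x0 y / fp Om L p2 x0 y = c" using hc that by auto
      ultimately show ?thesis by (simp add: field_simps)
    qed
    define q where "q = (\<lambda>x. p1 x - c * p2 x)"
    define q1 where "q1 = (\<lambda>x. deriv p1 x - c * deriv p2 x)"
    define r where "r = (\<lambda>x. deriv (deriv p1) x - c * deriv (deriv p2) x)"
    have E0: "q x0 * y + (poly Om x0 * q1 x0 - poly L x0 * q x0) = 0" if "(x0, y) \<in> V" for y
      using eq[OF that] unfolding fp_def q_def q1_def by (simp add: algebra_simps)
    have "q x0 * (y1 - y0) = (q x0 * y1 + (poly Om x0 * q1 x0 - poly L x0 * q x0))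
        - (q x0 * y0 + (poly Om x0 * q1 x0 - poly L x0 * q x0))" by (simp add: algebra_simps)
    also have "\<dots> = 0" using E0[OF z1] E0[OF z0] by simp
    finally have "q x0 * (y1 - y0) = 0" .
    hence q0: "q x0 = 0" using e(1) unfolding y1_def by simp
    hence "poly Om x0 * q1 x0 = 0" using E0[OF z0] by simp
    hence q10: "q1 x0 = 0" using assms(7) x0I by simp
    define a where "a = (\<lambda>x. - (poly (pderiv Om) x - 2 * poly L x) / poly Om x)"
    define b where "b = (\<lambda>x. - (n / 2 * (4 * poly (pderiv L) x - (n + 1) * poly (pderiv (pderiv Om)) x)) / poly Om x)"
    have dq: "\<forall>x\<in>I. (q has_real_derivative q1 x) (at x)"
      unfolding q_def q1_def using C2_derivs(1)[OF C1] C2_derivs(1)[OF C2]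
      by (auto intro!: derivative_eq_intros)
    have dq1: "\<forall>x\<in>I. (q1 has_real_derivative r x) (at x)"
      unfolding q1_def r_def using C2_derivs(2)[OF C1] C2_derivs(2)[OF C2]
      by (auto intro!: derivative_eq_intros)
    have ca: "continuous_on I a" unfolding a_def using assms(7)
      by (intro continuous_intros) auto
    have cb: "continuous_on I b" unfolding b_def using assms(7)
      by (intro continuous_intros) auto
    have req: "\<forall>x\<in>I. r x = a x * q1 x + b x * q x"
    proof
      fix x assume x: "x \<in> I"
      define A where "A = poly (pderiv Om) x - 2 * poly L x"
      define B where "B = n / 2 * (4 * poly (pderiv L) x - (n + 1) * poly (pderiv (pderiv Om)) x)"
      have "poly Om x * deriv (deriv p1) x
        + (poly (pderiv Om) x - 2 * poly L x) * deriv p1 x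
        + n / 2 * (4 * poly (pderiv L) x - (n + 1) * poly (pderiv (pderiv Om)) x) * p1 x = 0"
        using s1 x unfolding is_sol_def by blast
      hence e1: "poly Om x * deriv (deriv p1) x = - (A * deriv p1 x + B * p1 x)"
        unfolding A_def B_def by linarith
      have "poly Om x * deriv (deriv p2) x
        + (poly (pderiv Om) x - 2 * poly L x) * deriv p2 x
        + n / 2 * (4 * poly (pderiv L) x - (n + 1) * poly (pderiv (pderiv Om)) x) * p2 x = 0"
        using s2 x unfolding is_sol_def by blast
      hence e2: "poly Om x * deriv (deriv p2) x = - (A * deriv p2 x + B * p2 x)"
        unfolding A_def B_def by linarith
      have "poly Om x * r x = poly Om x * deriv (deriv p1) x - c * (poly Om x * deriv (deriv p2) x)"
        unfolding r_def by (simp add: algebra_simps)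
      also have "\<dots> = - (A * q1 x + B * q x)" unfolding e1 e2 q1_def q_def by (simp add: algebra_simps)
      finally have rr: "poly Om x * r x = - (A * q1 x + B * q x)" .
      have ab: "a x = - A / poly Om x" "b x = - B / poly Om x"
        unfolding a_def b_def A_def B_def by auto
      have nzx: "poly Om x \<noteq> 0" using assms(7) x by blast
      have "r x = (poly Om x * r x) / poly Om x" using nzx by simp
      also have "\<dots> = - (A * q1 x + B * q x) / poly Om x" unfolding rr ..
      also have "\<dots> = (- A / poly Om x) * q1 x + (- B / poly Om x) * q x"
        using nzx by (simp add: field_simps)
      finally show "r x = a x * q1 x + b x * q x" unfolding ab .
    qed
    have "\<forall>x\<in>I. q x = 0"
      by (rule ode_unique[OF assms(4,5) x0I q0 q10 dq dq1 ca cb req])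
    hence "\<forall>x\<in>I. 1 * p1 x + (- c) * p2 x = 0" unfolding q_def by simp
    with indep show False by fastforce
  qed
  show "first_integral (\<lambda>(x, y). poly Om x) (\<lambda>(x, y). Qsys Om L n x y)
              {(x, y). x \<in> I \<and> fp Om L p2 x y \<noteq> 0}
              (\<lambda>(x, y). fp Om L p1 x y / fp Om L p2 x y)"
    unfolding first_integral_def U_def[symmetric]
    using part1 cont orth nonconst by blast
qed

end
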